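(* For any $T,n,m\in\mathbb{N}_+$ there exist a constant $C(n)$ depending only on $n$ and a function $\phi(t)=\sum_{k=1}^m\alpha_kt^{-\beta_k}$ with $\alpha_k\in\mathbb{R}$ and $\beta_k>1$ for all $k\in[m]$ such that $$\sum_{t=1}^\infty\big|\mathbb{I}\{t=T\}-\phi(t)\big|\le\frac{C(n)T^{1.01(n+1)}}{m^n}.$$
   Context: $\mathbb{I}\{\cdot\}$ denotes the indicator function; $[m]=\{1,\dots,m\}$. *)

theory Defs
  imports Complex_Main
begin

end

theory Submission imports Defs "HOL-Analysis.Analysis" "HOL-Computational_Algebra.Polynomial" begin

lemma core:
  fixes T b :: nat and y :: "nat \<Rightarrow> real" and q p :: "real poly" and c :: real
  assumes T: "T \<ge> 1" and hb: "\<forall>j. 1 \<le> j \<longrightarrow> j < T \<longrightarrow> 2 * real j ^ b \<le> real T ^ b"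
  and y_def: "y = (\<lambda>j::nat. 1 / real j ^ b)"
  and q_def: "q = (\<Prod>j\<in>{1..<T}. [:- y j, 1:])"
  and c_def: "c = 1 / (y T * (\<Prod>j\<in>{1..<T}. (y T - y j)))"
  and p_def: "p = smult c (pCons 0 q)"
  shows "degree p \<le> T" "coeff p 0 = 0"
    "\<And>s. 1 \<le> s \<Longrightarrow> s < T \<Longrightarrow> poly p (y s) = 0" "poly p (y T) = 1"
    "\<And>s. s > T \<Longrightarrow> \<bar>poly p (y s)\<bar> \<le> 2^T * (real T / real s)^b"
proof -
  have ypos: "y j > 0" if "j \<ge> 1" for j using that by (simp add: y_def)
  have ylt: "2 * y T \<le> y j" if "1 \<le> j" "j < T" for j
  proof -
    have "2 * real j ^ b \<le> real T ^ b" using hb that by auto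
    moreover have "real j ^ b > 0" "real T ^ b > 0" using that by auto
    ultimately show ?thesis unfolding y_def by (simp add: field_simps)
  qed
  have pe: "poly p x = c * (x * (\<Prod>j\<in>{1..<T}. (x - y j)))" for x
    by (simp add: p_def q_def poly_prod)
  have "degree q \<le> sum (degree \<circ> (\<lambda>j. [:- y j, 1:])) {1..<T}"
    unfolding q_def by (rule degree_prod_sum_le) simp
  also have "\<dots> = T - 1" by simp
  finally have "degree q \<le> T - 1" .
  moreover have "degree p \<le> degree (pCons 0 q)" unfolding p_def by (rule degree_smult_le)
  moreover have "degree (pCons 0 q) \<le> Suc (degree q)" by (rule degree_pCons_le)
  ultimately show "degree p \<le> T" using T by linarith
  show "coeff p 0 = 0" by (simp add: p_def)
  show "poly p (y s) = 0" if "1 \<le> s" "s < T" for s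
  proof -
    have "(\<Prod>j\<in>{1..<T}. (y s - y j)) = 0"
      by (rule prod_zero) (use that in auto)
    then show ?thesis by (simp add: pe)
  qed
  have pT: "(\<Prod>j\<in>{1..<T}. (y T - y j)) \<noteq> 0"
  proof -
    have "y T - y j \<noteq> 0" if "j \<in> {1..<T}" for j using ylt[of j] ypos[of T] that T by auto
    then show ?thesis by simp
  qed
  show "poly p (y T) = 1" using pT ypos[OF T] by (simp add: pe c_def)
  show "\<bar>poly p (y s)\<bar> \<le> 2^T * (real T / real s)^b" if "s > T" for s
  proof -
    have s1: "s \<ge> 1" using that T by auto
    have "\<bar>poly p (y s)\<bar> = (y s / y T) * (\<Prod>j\<in>{1..<T}. \<bar>y s - y j\<bar> / \<bar>y T - y j\<bar>)"
    proof -
      have "\<bar>poly p (y s)\<bar> = \<bar>y s\<bar> * \<bar>\<Prod>j\<in>{1..<T}. (y s - y j)\<bar> / (\<bar>y T\<bar> * \<bar>\<Prod>j\<in>{1..<T}. (y T - y j)\<bar>)"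
        unfolding pe c_def by (simp add: abs_mult abs_divide)
      also have "\<dots> = (y s / y T) * ((\<Prod>j\<in>{1..<T}. \<bar>y s - y j\<bar>) / (\<Prod>j\<in>{1..<T}. \<bar>y T - y j\<bar>))"
        using ypos[OF T] ypos[OF s1] by (simp add: abs_prod)
      also have "\<dots> = (y s / y T) * (\<Prod>j\<in>{1..<T}. \<bar>y s - y j\<bar> / \<bar>y T - y j\<bar>)"
        by (simp add: prod_dividef)
      finally show ?thesis .
    qed
    also have "\<dots> \<le> (y s / y T) * 2 ^ T"
    proof (rule mult_left_mono)
      show "0 \<le> y s / y T" using ypos[OF T] ypos[OF s1] by simp
      show "(\<Prod>j\<in>{1..<T}. \<bar>y s - y j\<bar> / \<bar>y T - y j\<bar>) \<le> 2 ^ T"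
      proof (rule prod_le_power)
        fix j assume j: "j \<in> {1..<T}"
        have yj: "y s \<le> y j" "y s > 0"
        proof -
          show "y s > 0" using ypos[OF s1] .
          have "real j ^ b \<le> real s ^ b" using j that by (intro power_mono) auto
          moreover have "real j ^ b > 0" using j by auto
          ultimately show "y s \<le> y j" unfolding y_def by (simp add: frac_le)
        qed
        have "2 * y T \<le> y j" using ylt j by auto
        then have d: "y j - y T \<ge> y j / 2" by simp
        have "\<bar>y s - y j\<bar> \<le> y j" using yj by auto
        moreover have "\<bar>y T - y j\<bar> \<ge> y j / 2" using d abs_ge_minus_self[of "y T - y j"] by linarith
        moreover have "y j > 0" using j ypos by auto
        ultimately have "\<bar>y s - y j\<bar> / \<bar>y T - y j\<bar> \<le> y j / (y j / 2)"
          by (intro frac_le) auto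
        also have "\<dots> = 2" using \<open>y j > 0\<close> by simp
        finally show "0 \<le> \<bar>y s - y j\<bar> / \<bar>y T - y j\<bar> \<and> \<bar>y s - y j\<bar> / \<bar>y T - y j\<bar> \<le> 2" by simp
      qed auto
    qed
    also have "y s / y T = (real T / real s)^b" using s1 T by (simp add: y_def power_divide)
    finally show ?thesis by (simp add: mult.commute)
  qed
qed


lemma poly_sum:
  fixes p :: "real poly"
  assumes "degree p \<le> m" "coeff p 0 = 0"
  shows "poly p z = (\<Sum>k=1..m. coeff p k * z^k)"
proof -
  have "poly p z = (\<Sum>k\<le>degree p. coeff p k * z^k)" by (rule poly_altdef)
  also have "\<dots> = (\<Sum>k\<le>m. coeff p k * z^k)"
    by (rule sum.mono_neutral_left) (use assms in \<open>auto simp: coeff_eq_0\<close>)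
  also have "\<dots> = (\<Sum>k=1..m. coeff p k * z^k)"
  proof -
    have "{..m} = insert 0 {1..m}" by auto
    then show ?thesis using assms by simp
  qed
  finally show ?thesis .
qed

lemma approx:
  fixes T :: nat and \<epsilon> :: real
  assumes T: "T \<ge> 1" and e: "\<epsilon> > 0"
  shows "\<exists>p::real poly. \<exists>b::nat. b \<ge> 2 \<and> degree p \<le> T \<and> coeff p 0 = 0 \<and>
     summable (\<lambda>t. \<bar>(if t+1 = T then 1 else 0) - poly p (1/real(t+1)^b)\<bar>) \<and>
     (\<Sum>t. \<bar>(if t+1 = T then 1 else 0) - poly p (1/real(t+1)^b)\<bar>) \<le> \<epsilon>"
proof -
  define r where "r = real T / (real T + 1)"
  have r0: "0 < r" "r < 1" using T by (auto simp: r_def)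
  define g where "g = (\<lambda>t::nat. (real T / real (t+1))^2)"
  have gs: "summable g"
  proof -
    have "summable (\<lambda>n. inverse (of_nat n ^ 2 :: real))" by (rule inverse_power_summable) simp
    then have "summable (\<lambda>n. inverse (of_nat (n+1) ^ 2 :: real))" by (rule summable_ignore_initial_segment)
    then have "summable (\<lambda>n. real T ^ 2 * inverse (of_nat (n+1) ^ 2 :: real))" by (rule summable_mult)
    moreover have "g = (\<lambda>n. real T ^ 2 * inverse (of_nat (n+1) ^ 2 :: real))"
      unfolding g_def by (rule ext) (simp add: power_divide field_simps)
    ultimately show ?thesis by simp
  qed
  define S where "S = suminf g"
  have S0: "S \<ge> 0" unfolding S_def using gs by (intro suminf_nonneg) (auto simp: g_def)
  define \<delta> where "\<delta> = min (1/2) (\<epsilon> / (2^T * (S+1)))"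
  have d0: "\<delta> > 0" using e S0 by (simp add: \<delta>_def)
  have "(\<lambda>n. r^n) \<longlonglongrightarrow> 0" using r0 by (intro LIMSEQ_power_zero) auto
  then have "eventually (\<lambda>n. r^n < \<delta>) sequentially" using d0 by (rule order_tendstoD(2))
  then obtain N where N: "r^N < \<delta>" by (auto simp: eventually_sequentially)
  define b where "b = N + 2"
  have hb0: "2 * real j ^ b \<le> real T ^ b" if j: "1 \<le> j" "j < T" for j
  proof -
    have jT: "real j / real T \<le> r"
    proof -
      have "real j \<le> real T - 1" using j by auto
      then have "real j * (real T + 1) \<le> (real T - 1) * (real T + 1)" by (intro mult_right_mono) auto
      also have "\<dots> \<le> real T * real T" by (simp add: algebra_simps)
      finally show ?thesis using T unfolding r_def by (simp add: field_simps)
    qed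
    have "(real j / real T)^b \<le> (real j / real T)^N"
      unfolding b_def using j T by (intro power_decreasing) auto
    also have "\<dots> \<le> r^N" using jT j by (intro power_mono) auto
    also have "\<dots> \<le> 1/2" using N by (simp add: \<delta>_def)
    finally have "real j ^ b / real T ^ b \<le> 1/2" by (simp add: power_divide)
    then show ?thesis using T by (simp add: field_simps)
  qed
  have hb: "\<forall>j. 1 \<le> j \<longrightarrow> j < T \<longrightarrow> 2 * real j ^ b \<le> real T ^ b" using hb0 by blast
  define y where "y = (\<lambda>j::nat. 1 / real j ^ b)"
  define q where "q = (\<Prod>j\<in>{1..<T}. [:- y j, 1:])"
  define c where "c = 1 / (y T * (\<Prod>j\<in>{1..<T}. (y T - y j)))"
  define p where "p = smult c (pCons 0 q)"
  note C = core[OF T hb y_def q_def c_def p_def]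
  define f where "f = (\<lambda>t::nat. \<bar>(if t+1 = T then 1 else 0) - poly p (y (t+1))\<bar>)"
  have fb: "f t \<le> 2^T * r^N * g t" for t
  proof (cases "t + 1 < T")
    case True
    then have "f t = 0" unfolding f_def using C(3)[of "t+1"] True by simp
    then show ?thesis using r0 by (simp add: g_def)
  next
    case False
    show ?thesis
    proof (cases "t + 1 = T")
      case True
      then have "f t = 0" unfolding f_def using C(4) True by simp
      then show ?thesis using r0 by (simp add: g_def)
    next
      case False2: False
      then have gt: "t + 1 > T" using False by auto
      have "f t = \<bar>poly p (y (t+1))\<bar>" unfolding f_def using gt by simp
      also have "\<dots> \<le> 2^T * (real T / real (t+1))^b" using C(5)[OF gt] .
      also have "(real T / real (t+1))^b = (real T / real (t+1))^N * g t"
        unfolding g_def b_def by (simp only: power_add)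
      also have "2^T * ((real T / real (t+1))^N * g t) \<le> 2^T * (r^N * g t)"
      proof -
        have "(real T / real (t+1))^N \<le> r^N"
        proof (rule power_mono)
          have "real T + 1 \<le> real (t+1)" using gt by linarith
          then show "real T / real (t+1) \<le> r" unfolding r_def using T
            by (intro divide_left_mono) auto
        qed simp
        moreover have "g t \<ge> 0" by (simp add: g_def)
        ultimately show ?thesis by (intro mult_left_mono mult_right_mono) auto
      qed
      finally show ?thesis by (simp add: mult.assoc)
    qed
  qed
  have f0: "f t \<ge> 0" for t unfolding f_def by simp
  have gs2: "summable (\<lambda>t. 2^T * r^N * g t)" using gs by (rule summable_mult)
  have fs: "summable f"
    by (rule summable_comparison_test'[OF gs2]) (use fb f0 in auto)
  have "suminf f \<le> (\<Sum>t. 2^T * r^N * g t)" by (rule suminf_le[OF fb fs gs2])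
  also have "\<dots> = 2^T * r^N * S" unfolding S_def using gs by (rule suminf_mult)
  also have "\<dots> \<le> 2^T * (\<epsilon> / (2^T * (S+1))) * S"
  proof -
    have "r^N \<le> \<epsilon> / (2^T * (S+1))" using N by (simp add: \<delta>_def)
    then show ?thesis using S0 by (intro mult_right_mono mult_left_mono) auto
  qed
  also have "\<dots> = \<epsilon> * (S / (S+1))"
  proof -
    have "(2::real)^T * (\<epsilon> / (2^T * (S+1))) = \<epsilon> / (S+1)" by simp
    then show ?thesis by simp
  qed
  also have "\<dots> \<le> \<epsilon>"
  proof -
    have "S / (S+1) \<le> 1" using S0 by simp
    then show ?thesis using e mult_left_mono[of "S/(S+1)" 1 \<epsilon>] by simp
  qed
  finally have "suminf f \<le> \<epsilon>" .
  moreover have "f = (\<lambda>t. \<bar>(if t+1 = T then 1 else 0) - poly p (1/real(t+1)^b)\<bar>)"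
    unfolding f_def y_def by simp
  ultimately show ?thesis using fs C(1,2) unfolding b_def by (intro exI[of _ p] exI[of _ "N+2"]) auto
qed


lemma powr_term:
  fixes t b k :: nat
  assumes "t \<ge> 1"
  shows "real t powr (- (real b * real k)) = (1 / real t ^ b) ^ k"
proof -
  have "real t powr (real b * real k) = real t ^ (b * k)"
    using assms by (simp add: powr_realpow[symmetric])
  then show ?thesis using assms
    by (simp add: powr_minus power_mult power_one_over divide_inverse power_inverse)
qed

theorem lemmaF4:
  "\<forall>n::nat. n \<ge> 1 \<longrightarrow> (\<exists>C::real. \<forall>T::nat. \<forall>m::nat. T \<ge> 1 \<longrightarrow> m \<ge> 1 \<longrightarrow>
     (\<exists>(\<alpha>::nat \<Rightarrow> real) (\<beta>::nat \<Rightarrow> real).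
        (\<forall>k\<in>{1..m}. \<beta> k > 1) \<and>
        (let \<phi> = (\<lambda>t::nat. \<Sum>k=1..m. \<alpha> k * real t powr (- \<beta> k)) in
           summable (\<lambda>t. \<bar>(if t + 1 = T then 1 else 0) - \<phi> (t + 1)\<bar>) \<and>
           (\<Sum>t. \<bar>(if t + 1 = T then 1 else 0) - \<phi> (t + 1)\<bar>)
             \<le> C * real T powr (1.01 * (real n + 1)) / real m ^ n)))"
proof (intro allI impI exI[of _ 1])
  fix n T m :: nat
  assume n: "n \<ge> 1" and T: "T \<ge> 1" and m: "m \<ge> 1"
  define X where "X = real T powr (1.01 * (real n + 1))"
  have mpos: "real m ^ n > 0" using m by simp
  show "\<exists>(\<alpha>::nat \<Rightarrow> real) (\<beta>::nat \<Rightarrow> real).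
        (\<forall>k\<in>{1..m}. \<beta> k > 1) \<and>
        (let \<phi> = (\<lambda>t::nat. \<Sum>k=1..m. \<alpha> k * real t powr (- \<beta> k)) in
           summable (\<lambda>t. \<bar>(if t + 1 = T then 1 else 0) - \<phi> (t + 1)\<bar>) \<and>
           (\<Sum>t. \<bar>(if t + 1 = T then 1 else 0) - \<phi> (t + 1)\<bar>)
             \<le> 1 * real T powr (1.01 * (real n + 1)) / real m ^ n)"
  proof (cases "m < T")
    case True
    have "(\<lambda>t. \<bar>(if t + 1 = T then 1 else 0) - (\<Sum>k=1..m. 0 * real (t+1) powr (- 2))\<bar>)
          = (\<lambda>t. if t = T - 1 then 1 else (0::real))" using T by (auto simp: fun_eq_iff)
    moreover have "(\<lambda>t. if t = T - 1 then 1 else (0::real)) sums 1"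
      using sums_single[of "T - 1" "\<lambda>_. 1::real"] by simp
    moreover have "1 \<le> X / real m ^ n"
    proof -
      have "real m ^ n \<le> real T ^ n" using True by (intro power_mono) auto
      also have "\<dots> = real T powr real n" using T by (simp add: powr_realpow)
      also have "\<dots> \<le> X" unfolding X_def using T by (intro powr_mono) auto
      finally show ?thesis using mpos by simp
    qed
    ultimately show ?thesis unfolding X_def Let_def
      by (intro exI[of _ "\<lambda>_. 0"] exI[of _ "\<lambda>_. 2"]) (auto simp: sums_iff)
  next
    case False
    have Xpos: "X / real m ^ n > 0" unfolding X_def using T mpos by simp
    obtain p b where pb: "b \<ge> 2" "degree p \<le> T" "coeff p 0 = 0"
      "summable (\<lambda>t. \<bar>(if t+1 = T then 1 else 0) - poly p (1/real(t+1)^b)\<bar>)"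
      "(\<Sum>t. \<bar>(if t+1 = T then 1 else 0) - poly p (1/real(t+1)^b)\<bar>) \<le> X / real m ^ n"
      using approx[OF T Xpos] by blast
    have eq: "(\<Sum>k=1..m. coeff p k * real (t+1) powr (- (real b * real k))) = poly p (1/real(t+1)^b)" for t
    proof -
      have "(\<Sum>k=1..m. coeff p k * real (t+1) powr (- (real b * real k))) = (\<Sum>k=1..m. coeff p k * (1/real(t+1)^b)^k)"
      proof -
        have h: "\<And>k. real (t+1) powr (- (real b * real k)) = (1 / real (t+1)^b)^k"
          by (rule powr_term) simp
        show ?thesis by (simp only: h)
      qed
      also have "\<dots> = poly p (1/real(t+1)^b)"
        using pb(2,3) False by (intro poly_sum[symmetric]) auto
      finally show ?thesis .
    qed
    show ?thesis unfolding Let_def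
      apply (rule exI[of _ "coeff p"], rule exI[of _ "\<lambda>k. real b * real k"])
      apply (intro conjI)
      subgoal
      proof
        fix k assume "k \<in> {1..m}"
        then have "real k \<ge> 1" by simp
        moreover have "real b \<ge> 2" using pb(1) by simp
        ultimately have "real b * real k \<ge> 2 * 1" by (intro mult_mono) auto
        then show "real b * real k > 1" by simp
      qed
      using pb eq unfolding X_def by auto
  qed
qed

end
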